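(* If $g\in\mathcal{G}_0^0\cup\mathcal{G}_0^{sh}$, then for every finite measurable partition $\mathcal{P}$ the limit $\lim_{n\to\infty}\frac1nH(g,\mathcal{P}_n)$ exists and equals $h(g,\mathcal{P})$.
   Context: $\mathcal{G}_0$ is the set of concave functions $g:[0,1]\to\mathbb{R}$ with $g(0)=\lim_{x\to0^+}g(x)=0$. Let $\eta(x)=-x\log x$ and $\eta(0)=0$. Define $\mathcal{G}_0^0=\{g\in\mathcal{G}_0:\lim_{x\to0^+}g(x)/\eta(x)=0\}$ and $\mathcal{G}_0^{sh}=\{g\in\mathcal{G}_0:0<\lim_{x\to0^+}g(x)/\eta(x)<\infty\}$. $T$ is a measure-preserving map of a probability space $(X,\Sigma,\mu)$. For a finite measurable partition $\mathcal{P}$, let $\mathcal{P}_n=\bigvee_{i=0}^{n-1}T^{-i}\mathcal{P}$, $H(g,\mathcal{P})=\sum_{A\in\mathcal{P}}g(\mu(A))$, and $h(g,\mathcal{P})=\limsup_{n\to\infty}\frac1nH(g,\mathcal{P}_n)$. *)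

theory Defs
  imports "HOL-Probability.Probability"
begin

definition eta :: "real \<Rightarrow> real" where
  "eta x = (if x = 0 then 0 else - x * ln x)"

definition G0 :: "(real \<Rightarrow> real) set" where
  "G0 = {g. concave_on {0..1} g \<and> g 0 = 0 \<and> (g \<longlongrightarrow> 0) (at_right 0)}"

definition G0_zero :: "(real \<Rightarrow> real) set" where
  "G0_zero = {g \<in> G0. ((\<lambda>x. g x / eta x) \<longlongrightarrow> 0) (at_right 0)}"

definition G0_sh :: "(real \<Rightarrow> real) set" where
  "G0_sh = {g \<in> G0. \<exists>L::real. 0 < L \<and> ((\<lambda>x. g x / eta x) \<longlongrightarrow> L) (at_right 0)}"

definition measure_preserving_map :: "'a measure \<Rightarrow> ('a \<Rightarrow> 'a) \<Rightarrow> bool" where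
  "measure_preserving_map M T \<longleftrightarrow> T \<in> measurable M M \<and>
     (\<forall>A \<in> sets M. measure M (T -` A \<inter> space M) = measure M A)"

definition finite_meas_partition :: "'a measure \<Rightarrow> 'a set set \<Rightarrow> bool" where
  "finite_meas_partition M P \<longleftrightarrow> finite P \<and> P \<subseteq> sets M \<and> \<Union>P = space M \<and>
     disjoint P"

definition iter_join :: "'a measure \<Rightarrow> ('a \<Rightarrow> 'a) \<Rightarrow> 'a set set \<Rightarrow> nat \<Rightarrow> 'a set set" where
  "iter_join M T P n =
     {space M \<inter> (\<Inter>i<n. (T ^^ i) -` c i) | c. \<forall>i<n. c i \<in> P} - {{}}"

definition Hg :: "'a measure \<Rightarrow> (real \<Rightarrow> real) \<Rightarrow> 'a set set \<Rightarrow> real" where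
  "Hg M g P = (\<Sum>A\<in>P. g (measure M A))"

definition hg :: "'a measure \<Rightarrow> ('a \<Rightarrow> 'a) \<Rightarrow> (real \<Rightarrow> real) \<Rightarrow> 'a set set \<Rightarrow> ereal" where
  "hg M T g P = limsup (\<lambda>n. ereal (Hg M g (iter_join M T P n) / real n))"

end

theory Submission
  imports Defs
begin


lemma eta_alt: "eta x = - x * ln x"
  by (simp add: eta_def)

lemma eta_nonneg: "0 \<le> x \<Longrightarrow> x \<le> 1 \<Longrightarrow> 0 \<le> eta x"
  by (cases "x = 0") (auto simp: eta_def mult_nonneg_nonpos)

lemma eta_le1: assumes "0 \<le> x" shows "eta x \<le> 1"
proof (cases "x = 0")
  case False
  then have "x > 0" using assms by simp
  have "ln (1/x) \<le> 1/x - 1" using ln_le_minus_one[of "1/x"] \<open>x>0\<close> by simp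
  then have "- ln x \<le> 1/x - 1" using \<open>x>0\<close> by (simp add: ln_div)
  then have "x * (- ln x) \<le> x * (1/x - 1)" using \<open>x>0\<close> by (intro mult_left_mono) auto
  then show ?thesis using \<open>x>0\<close> by (simp add: eta_def algebra_simps)
qed (simp add: eta_def)

lemma gibbs_point:
  fixes x a b :: real
  assumes "0 \<le> x" "x \<le> a" "x \<le> b"
  shows "eta x \<le> x * (- ln a) + x * (- ln b) + a * b - x"
proof (cases "x = 0")
  case True
  then show ?thesis using assms by (simp add: eta_def)
next
  case False
  then have x: "x > 0" using assms by simp
  then have ab: "a > 0" "b > 0" using assms by auto
  have "ln (a*b/x) \<le> a*b/x - 1" using ln_le_minus_one[of "a*b/x"] x ab by simp
  then have "x * ln (a*b/x) \<le> x * (a*b/x - 1)" using x by (intro mult_left_mono) auto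
  moreover have "ln (a*b/x) = ln a + ln b - ln x" using x ab by (simp add: ln_div ln_mult)
  ultimately show ?thesis using x by (simp add: eta_def algebra_simps)
qed

lemma gibbs:
  fixes x :: "'i \<Rightarrow> 'k \<Rightarrow> real" and a :: "'i \<Rightarrow> real" and b :: "'k \<Rightarrow> real"
  assumes I: "finite I" and K: "finite K"
    and x0: "\<And>i k. i \<in> I \<Longrightarrow> k \<in> K \<Longrightarrow> 0 \<le> x i k"
    and xa: "\<And>i. i \<in> I \<Longrightarrow> (\<Sum>k\<in>K. x i k) = a i"
    and xb: "\<And>k. k \<in> K \<Longrightarrow> (\<Sum>i\<in>I. x i k) = b k"
    and sa: "(\<Sum>i\<in>I. a i) = 1" and sb: "(\<Sum>k\<in>K. b k) = 1"
  shows "(\<Sum>i\<in>I. \<Sum>k\<in>K. eta (x i k)) \<le> (\<Sum>i\<in>I. eta (a i)) + (\<Sum>k\<in>K. eta (b k))"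
proof -
  have xle: "x i k \<le> a i" "x i k \<le> b k" if "i \<in> I" "k \<in> K" for i k
  proof -
    have "x i k \<le> (\<Sum>k\<in>K. x i k)" using that x0 K by (intro member_le_sum) auto
    then show "x i k \<le> a i" using xa that by simp
    have "x i k \<le> (\<Sum>i\<in>I. x i k)" using that x0 I by (intro member_le_sum) auto
    then show "x i k \<le> b k" using xb that by simp
  qed
  have "(\<Sum>i\<in>I. \<Sum>k\<in>K. eta (x i k)) \<le>
      (\<Sum>i\<in>I. \<Sum>k\<in>K. x i k * (- ln (a i)) + x i k * (- ln (b k)) + a i * b k - x i k)"
    by (intro sum_mono gibbs_point) (auto simp: x0 xle)
  also have "\<dots> = (\<Sum>i\<in>I. (\<Sum>k\<in>K. x i k) * (- ln (a i))) + (\<Sum>k\<in>K. (\<Sum>i\<in>I. x i k) * (- ln (b k)))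
      + (\<Sum>i\<in>I. a i) * (\<Sum>k\<in>K. b k) - (\<Sum>i\<in>I. \<Sum>k\<in>K. x i k)"
    by (simp add: sum.distrib sum_subtractf sum_distrib_right sum_distrib_left sum.swap[of _ I K] sum_negf)
  also have "(\<Sum>i\<in>I. \<Sum>k\<in>K. x i k) = 1" using xa sa by simp
  also have "(\<Sum>i\<in>I. (\<Sum>k\<in>K. x i k) * (- ln (a i))) = (\<Sum>i\<in>I. eta (a i))"
    using xa by (simp add: eta_alt)
  also have "(\<Sum>k\<in>K. (\<Sum>i\<in>I. x i k) * (- ln (b k))) = (\<Sum>k\<in>K. eta (b k))"
    using xb by (simp add: eta_alt)
  finally show ?thesis using sa sb by simp
qed

lemma fekete_aux:
  fixes a :: "nat \<Rightarrow> real"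
  assumes sub: "\<And>m n. a (m + n) \<le> a m + a n"
  shows "a (q * m + r) \<le> real q * a m + a r"
proof (induction q)
  case (Suc q)
  have "a (Suc q * m + r) = a (m + (q * m + r))" by (simp add: algebra_simps)
  also have "\<dots> \<le> a m + a (q*m + r)" by (rule sub)
  finally show ?case using Suc by (simp add: algebra_simps)
qed simp

lemma fekete:
  fixes a :: "nat \<Rightarrow> real"
  assumes sub: "\<And>m n. a (m + n) \<le> a m + a n" and nn: "\<And>n. 0 \<le> a n"
  shows "\<exists>l. (\<lambda>n. a n / real n) \<longlonglongrightarrow> l"
proof -
  define S where "S = (\<lambda>n. a n / real n) ` {1..}"
  define l where "l = Inf S"
  have bdd: "bdd_below S" unfolding S_def using nn by (intro bdd_belowI[of _ 0]) auto
  have Sne: "S \<noteq> {}" unfolding S_def by auto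
  have lle: "l \<le> a n / real n" if "n \<ge> 1" for n
    unfolding l_def using that bdd by (intro cInf_lower) (auto simp: S_def)
  have "(\<lambda>n. a n / real n) \<longlonglongrightarrow> l"
  proof (rule LIMSEQ_I)
    fix r :: real assume r: "r > 0"
    have "Inf S < l + r/2" using r l_def by simp
    then obtain s where "s \<in> S" "s < l + r/2" using cInf_lessD[OF Sne] by blast
    then obtain m where m: "m \<ge> 1" "a m / real m < l + r/2" unfolding S_def by auto
    define K where "K = (\<Sum>j<m. a j)"
    have Ka: "a j \<le> K" if "j < m" for j
      unfolding K_def using that nn by (intro member_le_sum) auto
    obtain N where N: "N \<ge> 1" "K / real N < r/2"
    proof -
      obtain N0 :: nat where "K / (r/2) < real N0" using reals_Archimedean2 by blast
      then have "K < r/2 * real N0" using r by (simp add: field_simps)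
      then have "K / real (N0+1) < r/2" using r nn Ka[of 0] m
        by (simp add: field_simps)
      then show ?thesis using that[of "N0+1"] by simp
    qed
    show "\<exists>N. \<forall>n\<ge>N. norm (a n / real n - l) < r"
    proof (intro exI allI impI)
      fix n assume n: "n \<ge> N"
      then have npos: "real n > 0" using N by simp
      have dec: "n = (n div m) * m + n mod m" by simp
      have "a n \<le> real (n div m) * a m + a (n mod m)"
        using fekete_aux[OF sub, of "n div m" m "n mod m"] dec by simp
      also have "a (n mod m) \<le> K" using Ka m by simp
      also have "real (n div m) * a m \<le> real n * (a m / real m)"
      proof -
        have "real (n div m) * real m \<le> real n"
          by (metis of_nat_le_iff of_nat_mult div_times_less_eq_dividend)
        then have "real (n div m) * a m \<le> real n / real m * a m"
          using m nn[of m] by (intro mult_right_mono) (auto simp: field_simps)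
        then show ?thesis by simp
      qed
      finally have "a n / real n \<le> a m / real m + K / real n"
        using npos by (simp add: field_simps)
      also have "K / real n \<le> K / real N"
        using n N Ka[of 0] m nn[of 0] by (intro divide_left_mono) auto
      finally have up: "a n / real n < l + r" using m(2) N(2) by linarith
      have "l \<le> a n / real n" using lle n N by simp
      then show "norm (a n / real n - l) < r" using up by simp
    qed
  qed
  then show ?thesis by blast
qed



definition cell :: "'a measure \<Rightarrow> ('a \<Rightarrow> 'a) \<Rightarrow> (nat \<Rightarrow> 'a set) \<Rightarrow> nat \<Rightarrow> 'a set" where
  "cell M T c n = space M \<inter> (\<Inter>i<n. (T ^^ i) -` c i)"

locale mpt_part =
  fixes M :: "'a measure" and T :: "'a \<Rightarrow> 'a" and P :: "'a set set"
  assumes ps: "prob_space M" and mp: "measure_preserving_map M T"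
    and fp: "finite_meas_partition M P"
begin

abbreviation "J n \<equiv> iter_join M T P n"

lemma J_def': "J n = {cell M T c n | c. \<forall>i<n. c i \<in> P} - {{}}"
  unfolding iter_join_def cell_def by simp

lemma T_meas: "T \<in> measurable M M" using mp by (simp add: measure_preserving_map_def)

lemma Tn_meas: "T ^^ i \<in> measurable M M"
proof (induction i)
  case 0 then show ?case by (simp add: measurable_ident)
next
  case (Suc i) then show ?case using T_meas by (simp add: measurable_comp)
qed

lemma Tn_space: "x \<in> space M \<Longrightarrow> (T ^^ i) x \<in> space M"
  using measurable_space[OF Tn_meas] by blast

lemma Tn_pres: "A \<in> sets M \<Longrightarrow> measure M ((T ^^ i) -` A \<inter> space M) = measure M A"
proof (induction i arbitrary: A)
  case 0 then show ?case using sets.sets_into_space by (simp add: Int_absorb2)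
next
  case (Suc i)
  have TA: "T -` A \<inter> space M \<in> sets M" using Suc.prems T_meas by (rule measurable_sets[rotated])
  have "(T ^^ Suc i) -` A \<inter> space M = (T ^^ i) -` (T -` A \<inter> space M) \<inter> space M"
    using Tn_space by auto
  then have "measure M ((T ^^ Suc i) -` A \<inter> space M) = measure M (T -` A \<inter> space M)"
    using Suc.IH[OF TA] by simp
  also have "\<dots> = measure M A" using mp Suc.prems by (simp add: measure_preserving_map_def)
  finally show ?case .
qed

lemma P_sets: "P \<subseteq> sets M" and P_fin: "finite P" and P_cover: "\<Union>P = space M"
  and P_disj: "disjoint P"
  using fp by (auto simp: finite_meas_partition_def)

lemma cell_Suc: "cell M T c (Suc n) = cell M T c n \<inter> ((T ^^ n) -` c n \<inter> space M)"
  unfolding cell_def by (auto simp: lessThan_Suc)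

lemma cell_sets: "(\<forall>i<n. c i \<in> sets M) \<Longrightarrow> cell M T c n \<in> sets M"
proof (induction n)
  case 0 then show ?case by (simp add: cell_def)
next
  case (Suc n)
  have "(T ^^ n) -` c n \<inter> space M \<in> sets M" using Suc.prems Tn_meas by (auto intro: measurable_sets)
  then show ?case using Suc by (simp add: cell_Suc)
qed

lemma cell_cong: "(\<And>i. i < n \<Longrightarrow> c i = d i) \<Longrightarrow> cell M T c n = cell M T d n"
  unfolding cell_def by auto

lemma J_props: assumes "A \<in> J n" shows "A \<in> sets M" "A \<noteq> {}" "A \<subseteq> space M"
proof -
  obtain c where "A = cell M T c n" "\<forall>i<n. c i \<in> P" "A \<noteq> {}" using assms unfolding J_def' by blast
  then show "A \<in> sets M" "A \<noteq> {}" "A \<subseteq> space M" using P_sets cell_sets[of n c]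
    by (auto simp: cell_def)
qed

lemma J_finite: "finite (J n)"
proof -
  have "J n \<subseteq> (\<lambda>c. cell M T c n) ` (PiE {..<n} (\<lambda>_. P))"
  proof
    fix A assume "A \<in> J n"
    then obtain c where A: "A = cell M T c n" "\<forall>i<n. c i \<in> P" unfolding J_def' by blast
    have "A = cell M T (restrict c {..<n}) n" using A(1) cell_cong[of n c "restrict c {..<n}"] by simp
    moreover have "restrict c {..<n} \<in> PiE {..<n} (\<lambda>_. P)" using A by auto
    ultimately show "A \<in> (\<lambda>c. cell M T c n) ` (PiE {..<n} (\<lambda>_. P))" by blast
  qed
  moreover have "finite ((\<lambda>c. cell M T c n) ` (PiE {..<n} (\<lambda>_. P)))"
    using P_fin by (intro finite_imageI finite_PiE) auto
  ultimately show ?thesis by (rule finite_subset)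
qed

lemma J_disj: assumes "A \<in> J n" "B \<in> J n" "A \<noteq> B" shows "A \<inter> B = {}"
proof (rule ccontr)
  assume ne: "A \<inter> B \<noteq> {}"
  obtain c where A: "A = cell M T c n" "\<forall>i<n. c i \<in> P" using assms(1) unfolding J_def' by blast
  obtain d where B: "B = cell M T d n" "\<forall>i<n. d i \<in> P" using assms(2) unfolding J_def' by blast
  obtain x where x: "x \<in> A" "x \<in> B" using ne by blast
  have "c i = d i" if "i < n" for i
  proof (rule ccontr)
    assume "c i \<noteq> d i"
    then have "c i \<inter> d i = {}" using disjointD[OF P_disj] A(2) B(2) that by blast
    moreover have "(T ^^ i) x \<in> c i" "(T ^^ i) x \<in> d i"
      using x A(1) B(1) that unfolding cell_def by auto
    ultimately show False by blast
  qed
  then have "A = B" using A(1) B(1) cell_cong[of n c d] by simp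
  then show False using assms by simp
qed

lemma J_cover: "\<Union>(J n) = space M"
proof
  show "\<Union>(J n) \<subseteq> space M" using J_props by blast
  show "space M \<subseteq> \<Union>(J n)"
  proof
    fix x assume x: "x \<in> space M"
    define c where "c i = (SOME p. p \<in> P \<and> (T ^^ i) x \<in> p)" for i
    have c: "c i \<in> P \<and> (T ^^ i) x \<in> c i" for i
    proof -
      have "(T ^^ i) x \<in> \<Union>P" using Tn_space[OF x] P_cover by simp
      then have "\<exists>p. p \<in> P \<and> (T ^^ i) x \<in> p" by blast
      then show ?thesis unfolding c_def by (rule someI_ex)
    qed
    have "x \<in> cell M T c n" using x c by (auto simp: cell_def)
    moreover have "cell M T c n \<in> J n" unfolding J_def' using c \<open>x \<in> cell M T c n\<close> by blast
    ultimately show "x \<in> \<Union>(J n)" by blast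
  qed
qed

lemma fin_emeasure: "emeasure M A \<noteq> \<infinity>"
  using ps by (simp add: prob_space_def finite_measure.emeasure_finite)

lemma J_disj_fam: "disjoint_family_on f (J n)" if "\<And>A. A \<in> J n \<Longrightarrow> f A \<subseteq> A"
  using J_disj that unfolding disjoint_family_on_def by blast

lemma J_sum: "(\<Sum>A\<in>J n. measure M A) = 1"
proof -
  have "measure M (\<Union>A\<in>J n. A) = (\<Sum>A\<in>J n. measure M A)"
    using J_finite J_props fin_emeasure by (intro measure_finite_Union J_disj_fam) auto
  then show ?thesis using J_cover ps by (simp add: prob_space.prob_space)
qed

lemma sum_B: assumes "A \<in> J m"
  shows "(\<Sum>B\<in>J n. measure M (A \<inter> (T ^^ m) -` B)) = measure M A"
proof -
  have fam: "disjoint_family_on (\<lambda>B. A \<inter> (T ^^ m) -` B) (J n)"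
    unfolding disjoint_family_on_def
  proof (intro ballI impI)
    fix B B' assume "B \<in> J n" "B' \<in> J n" "B \<noteq> B'"
    then have "B \<inter> B' = {}" by (rule J_disj)
    then show "(A \<inter> (T ^^ m) -` B) \<inter> (A \<inter> (T ^^ m) -` B') = {}" by auto
  qed
  have sets: "A \<inter> (T ^^ m) -` B \<in> sets M" if "B \<in> J n" for B
  proof -
    have "A \<inter> (T ^^ m) -` B = A \<inter> ((T ^^ m) -` B \<inter> space M)" using J_props[OF assms] by blast
    then show ?thesis using J_props[OF assms] J_props[OF that] Tn_meas by (auto intro: measurable_sets)
  qed
  have "measure M (\<Union>B\<in>J n. A \<inter> (T ^^ m) -` B) = (\<Sum>B\<in>J n. measure M (A \<inter> (T ^^ m) -` B))"
    using J_finite fam sets fin_emeasure by (intro measure_finite_Union) auto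
  moreover have "(\<Union>B\<in>J n. A \<inter> (T ^^ m) -` B) = A"
  proof -
    have "(\<Union>B\<in>J n. A \<inter> (T ^^ m) -` B) = A \<inter> (T ^^ m) -` (\<Union>(J n))" by blast
    also have "\<dots> = A"
    proof -
      have "A \<subseteq> space M" using J_props(3)[OF assms] .
      moreover have "\<And>x. x \<in> space M \<Longrightarrow> (T ^^ m) x \<in> space M" by (rule Tn_space)
      ultimately show ?thesis unfolding J_cover by auto
    qed
    finally show ?thesis .
  qed
  ultimately show ?thesis by simp
qed

lemma sum_A: assumes "B \<in> J n"
  shows "(\<Sum>A\<in>J m. measure M (A \<inter> (T ^^ m) -` B)) = measure M B"
proof -
  have fam: "disjoint_family_on (\<lambda>A. A \<inter> (T ^^ m) -` B) (J m)"
    by (intro J_disj_fam) blast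
  have sets: "A \<inter> (T ^^ m) -` B \<in> sets M" if "A \<in> J m" for A
  proof -
    have "A \<inter> (T ^^ m) -` B = A \<inter> ((T ^^ m) -` B \<inter> space M)" using J_props[OF that] by blast
    then show ?thesis using J_props[OF assms] J_props[OF that] Tn_meas by (auto intro: measurable_sets)
  qed
  have "measure M (\<Union>A\<in>J m. A \<inter> (T ^^ m) -` B) = (\<Sum>A\<in>J m. measure M (A \<inter> (T ^^ m) -` B))"
    using J_finite fam sets fin_emeasure by (intro measure_finite_Union) auto
  moreover have "(\<Union>A\<in>J m. A \<inter> (T ^^ m) -` B) = (T ^^ m) -` B \<inter> space M"
    using J_cover by blast
  ultimately show ?thesis using Tn_pres J_props[OF assms] by simp
qed

lemma J_split: "J (m + n) \<subseteq> (\<lambda>(A, B). A \<inter> (T ^^ m) -` B) ` (J m \<times> J n)"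
proof
  fix C assume "C \<in> J (m + n)"
  then obtain c where C: "C = cell M T c (m+n)" "\<forall>i<m+n. c i \<in> P" "C \<noteq> {}"
    unfolding J_def' by blast
  define A where "A = cell M T c m"
  define B where "B = cell M T (\<lambda>i. c (m + i)) n"
  have eq: "C = A \<inter> (T ^^ m) -` B"
  proof (intro set_eqI iffI)
    fix x assume x: "x \<in> C"
    then have xs: "x \<in> space M" and xi: "\<And>i. i < m + n \<Longrightarrow> (T ^^ i) x \<in> c i"
      using C by (auto simp: cell_def)
    have "(T ^^ i) ((T ^^ m) x) \<in> c (m + i)" if "i < n" for i
      using xi[of "i + m"] that by (simp add: funpow_add add.commute)
    then show "x \<in> A \<inter> (T ^^ m) -` B" using xs xi Tn_space[OF xs]
      by (auto simp: A_def B_def cell_def)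
  next
    fix x assume x: "x \<in> A \<inter> (T ^^ m) -` B"
    then have xs: "x \<in> space M" and x1: "\<And>i. i < m \<Longrightarrow> (T ^^ i) x \<in> c i"
      and x2: "\<And>i. i < n \<Longrightarrow> (T ^^ i) ((T ^^ m) x) \<in> c (m + i)"
      by (auto simp: A_def B_def cell_def)
    have "(T ^^ i) x \<in> c i" if "i < m + n" for i
    proof (cases "i < m")
      case True then show ?thesis using x1 by simp
    next
      case False
      define j where "j = i - m"
      have j: "i = m + j" "j < n" using False that unfolding j_def by auto
      then show ?thesis using x2[of j] by (simp add: funpow_add add.commute)
    qed
    then show "x \<in> C" using C xs by (auto simp: cell_def)
  qed
  have "A \<noteq> {}" "B \<noteq> {}" using C(3) eq by auto
  have "\<forall>i<m. c i \<in> P" "\<forall>i<n. c (m + i) \<in> P" using C(2) by auto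
  have "A \<in> J m" unfolding J_def' A_def
    using \<open>A \<noteq> {}\<close> \<open>\<forall>i<m. c i \<in> P\<close> unfolding A_def by blast
  moreover have "B \<in> J n" unfolding J_def'
    using \<open>B \<noteq> {}\<close> \<open>\<forall>i<n. c (m + i) \<in> P\<close> unfolding B_def by blast
  ultimately show "C \<in> (\<lambda>(A, B). A \<inter> (T ^^ m) -` B) ` (J m \<times> J n)" using eq by blast
qed

definition E :: "nat \<Rightarrow> real" where "E n = (\<Sum>A\<in>J n. eta (measure M A))"

lemma meas_le1: "measure M A \<le> 1" using ps by (simp add: prob_space.prob_le_1)

lemma E_nonneg: "0 \<le> E n"
  unfolding E_def using meas_le1 by (intro sum_nonneg eta_nonneg) auto

lemma E_sub: "E (m + n) \<le> E m + E n"
proof -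
  let ?f = "\<lambda>(A, B). A \<inter> (T ^^ m) -` B"
  have "E (m + n) \<le> (\<Sum>C\<in>?f ` (J m \<times> J n). eta (measure M C))"
    unfolding E_def using J_split J_finite meas_le1
    by (intro sum_mono2 finite_imageI eta_nonneg) auto
  also have "\<dots> \<le> (\<Sum>p\<in>J m \<times> J n. eta (measure M (?f p)))"
    using J_finite meas_le1 by (intro sum_image_le[unfolded o_def] eta_nonneg) auto
  also have "\<dots> = (\<Sum>A\<in>J m. \<Sum>B\<in>J n. eta (measure M (A \<inter> (T ^^ m) -` B)))"
    by (simp add: sum.cartesian_product split_beta)
  also have "\<dots> \<le> E m + E n" unfolding E_def
    using J_finite sum_A sum_B J_sum by (intro gibbs) auto
  finally show ?thesis .
qed

lemma E_conv: "\<exists>l. (\<lambda>n. E n / real n) \<longlonglongrightarrow> l"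
  using fekete[OF E_sub E_nonneg] .

end


lemma concave_lower:
  assumes "concave_on {0..1} g" "g 0 = 0" "0 \<le> x" "x \<le> 1"
  shows "x * g 1 \<le> g x"
proof -
  have "(1 - x) * g 0 + x * g 1 \<le> g ((1 - x) *\<^sub>R 0 + x *\<^sub>R 1)"
    using assms(1) assms(3,4) unfolding concave_on_iff by (intro conjunct2[OF assms(1)[unfolded concave_on_iff], rule_format]) auto
  then show ?thesis using assms by simp
qed

lemma concave_upper:
  assumes "concave_on {0..1} g" "g 0 = 0" "0 < d" "d \<le> x" "x \<le> 1"
  shows "g x \<le> \<bar>g d\<bar> / d"
proof -
  have x: "x > 0" using assms by simp
  have "(1 - d/x) * g 0 + (d/x) * g x \<le> g ((1 - d/x) *\<^sub>R 0 + (d/x) *\<^sub>R x)"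
    using assms x by (intro conjunct2[OF assms(1)[unfolded concave_on_iff], rule_format])
      (auto simp: field_simps)
  then have "(d/x) * g x \<le> g d" using assms x by simp
  then have "(x/d) * ((d/x) * g x) \<le> (x/d) * g d" using x assms by (intro mult_left_mono) auto
  then have "g x \<le> (x/d) * g d" using x assms by simp
  also have "\<dots> \<le> (x/d) * \<bar>g d\<bar>" using x assms by (intro mult_left_mono) auto
  also have "\<dots> \<le> (1/d) * \<bar>g d\<bar>" using x assms by (intro mult_right_mono divide_right_mono) auto
  finally show ?thesis by simp
qed

lemma d_bound:
  fixes g :: "real \<Rightarrow> real"
  assumes conc: "concave_on {0..1} g" and g0: "g 0 = 0" and L: "0 \<le> L"
    and lim: "((\<lambda>x. g x / eta x) \<longlongrightarrow> L) (at_right 0)" and e: "e > 0"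
  shows "\<exists>K\<ge>0. \<forall>x. 0 \<le> x \<longrightarrow> x \<le> 1 \<longrightarrow> \<bar>g x - L * eta x\<bar> \<le> e * eta x + K * x"
proof -
  have "eventually (\<lambda>x. dist (g x / eta x) L < e) (at_right 0)"
    using tendstoD[OF lim e] .
  then obtain b where b: "b > 0" "\<And>y. y > 0 \<Longrightarrow> y < b \<Longrightarrow> dist (g y / eta y) L < e"
    unfolding eventually_at_right_field by auto
  define d where "d = min b (1/2)"
  have d: "0 < d" "d < 1" "d \<le> b" using b by (auto simp: d_def)
  define K where "K = (\<bar>g 1\<bar> + \<bar>g d\<bar> / d + L) / d"
  have K0: "K \<ge> 0" using d L unfolding K_def by auto
  have "\<bar>g x - L * eta x\<bar> \<le> e * eta x + K * x" if x: "0 \<le> x" "x \<le> 1" for x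
  proof (cases "x < d")
    case True
    show ?thesis
    proof (cases "x = 0")
      case True then show ?thesis using g0 by (simp add: eta_def)
    next
      case False
      then have xp: "x > 0" using x by simp
      have lnx: "ln x < 0" using xp True d by simp
      have etap: "eta x > 0" using xp lnx by (simp add: eta_def mult_pos_neg)
      have "\<bar>g x / eta x - L\<bar> < e" using b(2)[OF xp] True d by (simp add: dist_real_def)
      then have "\<bar>g x / eta x - L\<bar> * eta x \<le> e * eta x" using etap by (intro mult_right_mono) auto
      moreover have "\<bar>g x / eta x - L\<bar> * eta x = \<bar>g x - L * eta x\<bar>"
      proof -
        have "(g x / eta x - L) * eta x = g x - L * eta x" using etap by (simp add: field_simps)
        then show ?thesis using etap by (metis abs_mult abs_of_pos)
      qed
      moreover have "K * x \<ge> 0" using K0 x by simp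
      ultimately show ?thesis by linarith
    qed
  next
    case False
    have "g x \<le> \<bar>g d\<bar> / d" using concave_upper[OF conc g0 d(1)] False x by simp
    moreover have "x * g 1 \<le> g x" using concave_lower[OF conc g0 x] .
    moreover have "- \<bar>g 1\<bar> \<le> x * g 1"
    proof -
      have "\<bar>x * g 1\<bar> \<le> \<bar>g 1\<bar>" using x by (simp add: abs_mult mult_left_le_one_le)
      then show ?thesis by linarith
    qed
    moreover have "0 \<le> eta x" "eta x \<le> 1" using x eta_nonneg eta_le1 by auto
    moreover have "0 \<le> L * eta x" "L * eta x \<le> L" using L \<open>0 \<le> eta x\<close> \<open>eta x \<le> 1\<close>
      by (auto simp: mult_left_le)
    moreover have "0 \<le> \<bar>g d\<bar> / d" using d by simp
    ultimately have "\<bar>g x - L * eta x\<bar> \<le> \<bar>g 1\<bar> + \<bar>g d\<bar> / d + L"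
      unfolding abs_le_iff by linarith
    also have "\<dots> = K * d" using d unfolding K_def by simp
    also have "\<dots> \<le> K * x" using False K0 by (intro mult_left_mono) auto
    finally have H: "\<bar>g x - L * eta x\<bar> \<le> K * x" .
    have "0 \<le> e * eta x" using e \<open>0 \<le> eta x\<close> by simp
    with H show ?thesis by linarith
  qed
  then show ?thesis using K0 by blast
qed

context mpt_part
begin

lemma E_le: "E n \<le> real n * E 1"
proof (induction n)
  case 0
  have "J 0 = {space M}" using ps unfolding J_def' by (auto simp: cell_def prob_space.not_empty)
  then show ?case using ps by (simp add: E_def prob_space.prob_space eta_def)
next
  case (Suc n)
  have "E (Suc n) \<le> E n + E 1" using E_sub[of n 1] by simp
  then show ?case using Suc by (simp add: algebra_simps)
qed

lemma Hg_conv: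
  fixes g :: "real \<Rightarrow> real"
  assumes conc: "concave_on {0..1} g" and g0: "g 0 = 0" and L: "0 \<le> L"
    and lim: "((\<lambda>x. g x / eta x) \<longlongrightarrow> L) (at_right 0)"
    and l: "(\<lambda>n. E n / real n) \<longlonglongrightarrow> l"
  shows "(\<lambda>n. Hg M g (J n) / real n) \<longlonglongrightarrow> L * l"
proof -
  define D where "D n = (\<Sum>A\<in>J n. g (measure M A) - L * eta (measure M A))" for n
  have HD: "Hg M g (J n) / real n = L * (E n / real n) + D n / real n" for n
    unfolding Hg_def D_def E_def by (simp add: sum_subtractf sum_distrib_left add_divide_distrib[symmetric])
  have Dlim: "(\<lambda>n. D n / real n) \<longlonglongrightarrow> 0"
  proof (rule LIMSEQ_I)
    fix r :: real assume r: "r > 0"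
    have E1: "E 1 \<ge> 0" by (rule E_nonneg)
    define e where "e = r / (2 * (E 1 + 1))"
    have e: "e > 0" using r E1 by (simp add: e_def)
    obtain K where K: "K \<ge> 0" "\<And>x. 0 \<le> x \<Longrightarrow> x \<le> 1 \<Longrightarrow> \<bar>g x - L * eta x\<bar> \<le> e * eta x + K * x"
      using d_bound[OF conc g0 L lim e] by blast
    have Db: "\<bar>D n\<bar> \<le> e * E n + K" for n
    proof -
      have "\<bar>D n\<bar> \<le> (\<Sum>A\<in>J n. \<bar>g (measure M A) - L * eta (measure M A)\<bar>)"
        unfolding D_def by (rule sum_abs)
      also have "\<dots> \<le> (\<Sum>A\<in>J n. e * eta (measure M A) + K * measure M A)"
        using K meas_le1 by (intro sum_mono) auto
      also have "\<dots> = e * E n + K"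
        by (simp add: sum.distrib sum_distrib_left[symmetric] E_def J_sum)
      finally show ?thesis .
    qed
    obtain N :: nat where N: "K / (r/2) < real N" using reals_Archimedean2 by blast
    show "\<exists>N. \<forall>n\<ge>N. norm (D n / real n - 0) < r"
    proof (intro exI[of _ "N+1"] allI impI)
      fix n assume n: "n \<ge> N + 1"
      then have np: "real n > 0" by simp
      have "\<bar>D n\<bar> / real n \<le> (e * E n + K) / real n" using Db np by (intro divide_right_mono) auto
      also have "\<dots> = e * (E n / real n) + K / real n" by (simp add: add_divide_distrib)
      also have "E n / real n \<le> E 1" using E_le[of n] np by (simp add: field_simps)
      also have "K / real n < r / 2"
      proof -
        have "K < r/2 * real N" using N r by (simp add: field_simps)
        also have "\<dots> \<le> r/2 * real n" using n r by (intro mult_left_mono) auto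
        finally show ?thesis using np by (simp add: field_simps)
      qed
      finally have "\<bar>D n\<bar> / real n < e * E 1 + r/2" using e by (simp add: mult_left_mono)
      also have "e * E 1 \<le> r / 2"
      proof -
        have "e * E 1 = r/2 * (E 1 / (E 1 + 1))" using E1 by (simp add: e_def field_simps)
        also have "\<dots> \<le> r/2 * 1" using E1 r by (intro mult_left_mono) auto
        finally show ?thesis by simp
      qed
      finally show "norm (D n / real n - 0) < r" by simp
    qed
  qed
  have "(\<lambda>n. L * (E n / real n) + D n / real n) \<longlonglongrightarrow> L * l + 0"
    by (intro tendsto_add tendsto_mult_left l Dlim)
  then show ?thesis unfolding HD by simp
qed

end

theorem mainTheorem6:
  fixes M :: "'a measure" and T :: "'a \<Rightarrow> 'a" and g :: "real \<Rightarrow> real"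
    and P :: "'a set set"
  assumes "prob_space M"
    and "measure_preserving_map M T"
    and "g \<in> G0_zero \<union> G0_sh"
    and "finite_meas_partition M P"
  shows "(\<lambda>n. ereal (Hg M g (iter_join M T P n) / real n)) \<longlonglongrightarrow> hg M T g P"
proof -
  interpret mpt_part M T P using assms by (simp add: mpt_part_def)
  obtain L where L: "0 \<le> L" "((\<lambda>x. g x / eta x) \<longlongrightarrow> L) (at_right 0)"
    and conc: "concave_on {0..1} g" and g0: "g 0 = 0"
    using assms(3) unfolding G0_zero_def G0_sh_def G0_def by (auto intro: less_imp_le)
  obtain l where l: "(\<lambda>n. E n / real n) \<longlonglongrightarrow> l" using E_conv by blast
  have lim: "(\<lambda>n. ereal (Hg M g (J n) / real n)) \<longlonglongrightarrow> ereal (L * l)"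
    using Hg_conv[OF conc g0 L l] by (rule tendsto_ereal)
  have "hg M T g P = ereal (L * l)"
    unfolding hg_def by (rule lim_imp_Limsup[OF trivial_limit_sequentially lim])
  then show ?thesis using lim by simp
qed


end
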